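(* For $f\in C_c^\infty(\mathbb R)$ define $\Psi_Nf:\frac1N\mathbb Z\to\mathbb R$ by $(\Psi_Nf)(i)=f(i)$ if $i\in\frac1N\mathbb Z\setminus A_N$ and $(\Psi_Nf)(i)=f(0)$ otherwise, where $A_N=\frac1N\{-R,\dots,R\}\setminus\{0\}$ for a fixed integer $R\ge1$. Then for every $f\in C_c^\infty(\mathbb R)$ the sequence $\Psi_Nf\in H_N^{\mathrm{sip}}$ converges strongly to $f\in H^{\mathrm{sbm}}$ with respect to the Hilbert space convergence $H_N^{\mathrm{sip}}\to H^{\mathrm{sbm}}$.
   Context: $\gamma>0$; $\mu_N$ gives mass $\frac1N$ to each point of $\frac1N\mathbb Z$; $\nu_{\gamma,N}=\mu_N+\sqrt2\gamma\delta_0$; $H_N^{\mathrm{sip}}=L^2(\frac1N\mathbb Z,\nu_{\gamma,N})$; $H^{\mathrm{sbm}}=L^2(\mathbb R,dx+\sqrt2\gamma\delta_0)$. Hilbert convergence is witnessed by $C=\{f+\lambda\mathbf 1_{\{0\}}:f\in C_c^\infty(\mathbb R),\lambda\in\mathbb R\}$ and $\Phi_Nf=f|_{\frac1N\mathbb Z}$. $f_N\in H_N^{\mathrm{sip}}$ converges strongly to $f\in H^{\mathrm{sbm}}$ if there exist $\tilde f_M\in C$ with $\|\tilde f_M-f\|_{H^{\mathrm{sbm}}}\to0$ and $\lim_{M\to\infty}\limsup_{N\to\infty}\|\Phi_N\tilde f_M-f_N\|_{H_N^{\mathrm{sip}}}=0$. *)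

theory Defs
  imports "HOL-Analysis.Analysis" "HOL-Library.Extended_Real"
begin

definition Cc_inf :: "(real \<Rightarrow> real) set" where
  "Cc_inf = {f. (\<forall>n x. (deriv ^^ n) f differentiable (at x))
               \<and> compact (closure {x. f x \<noteq> 0})}"

definition core_C :: "(real \<Rightarrow> real) set" where
  "core_C = {g. \<exists>f c. f \<in> Cc_inf \<and> g = (\<lambda>x. f x + c * indicator {0} x)}"

text \<open>Norm of H^sbm = L^2(R, dx + sqrt 2 gamma delta_0).\<close>
definition sbm_norm :: "real \<Rightarrow> (real \<Rightarrow> real) \<Rightarrow> real" where
  "sbm_norm \<gamma> g = sqrt ((LINT x|lborel. (g x)\<^sup>2) + sqrt 2 * \<gamma> * (g 0)\<^sup>2)"

text \<open>Elements of H_N^sip are represented as functions int => real, where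
  u i is the value at the lattice point i/N. Norm of L^2(Z/N, mu_N + sqrt 2 gamma delta_0).\<close>
definition sip_norm :: "real \<Rightarrow> nat \<Rightarrow> (int \<Rightarrow> real) \<Rightarrow> real" where
  "sip_norm \<gamma> N u = sqrt ((\<Sum>\<^sub>\<infinity>i::int. (u i)\<^sup>2 / real N) + sqrt 2 * \<gamma> * (u 0)\<^sup>2)"

definition Phi :: "nat \<Rightarrow> (real \<Rightarrow> real) \<Rightarrow> (int \<Rightarrow> real)" where
  "Phi N f = (\<lambda>i. f (real_of_int i / real N))"

definition Psi :: "int \<Rightarrow> nat \<Rightarrow> (real \<Rightarrow> real) \<Rightarrow> (int \<Rightarrow> real)" where
  "Psi R N f = (\<lambda>i. if i \<in> {-R..R} - {0} then f 0 else f (real_of_int i / real N))"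

definition strongly_converges :: "real \<Rightarrow> (nat \<Rightarrow> int \<Rightarrow> real) \<Rightarrow> (real \<Rightarrow> real) \<Rightarrow> bool" where
  "strongly_converges \<gamma> fN f \<longleftrightarrow>
     (\<exists>ft :: nat \<Rightarrow> real \<Rightarrow> real.
        (\<forall>M. ft M \<in> core_C) \<and>
        (\<lambda>M. sbm_norm \<gamma> (\<lambda>x. ft M x - f x)) \<longlonglongrightarrow> 0 \<and>
        (\<lambda>M. limsup (\<lambda>N. ereal (sip_norm \<gamma> N (\<lambda>i. Phi N (ft M) i - fN N i)))) \<longlonglongrightarrow> 0)"

end

theory Submission
  imports Defs
begin

theorem proposition5p14:
  fixes \<gamma> :: real and R :: int and f :: "real \<Rightarrow> real"
  assumes "\<gamma> > 0" and "R \<ge> 1" and "f \<in> Cc_inf"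
  shows "strongly_converges \<gamma> (\<lambda>N. Psi R N f) f"
proof -
  define S where "S = {-R..R} - {0::int}"
  have fS: "finite S" unfolding S_def by simp
  have "f differentiable (at 0)"
    using assms(3) unfolding Cc_inf_def by (metis (mono_tags) funpow_0 mem_Collect_eq)
  hence cont: "isCont f 0" by (rule differentiable_imp_continuous_within)
  have d: "Phi N f i - Psi R N f i = (if i \<in> S then f (real_of_int i / real N) - f 0 else 0)" for N i
    unfolding Phi_def Psi_def S_def by auto
  have inf: "(\<Sum>\<^sub>\<infinity>i::int. (Phi N f i - Psi R N f i)\<^sup>2 / real N)
      = (\<Sum>i\<in>S. (f (real_of_int i / real N) - f 0)\<^sup>2 / real N)" for N
  proof -
    have "(\<Sum>\<^sub>\<infinity>i::int. (Phi N f i - Psi R N f i)\<^sup>2 / real N)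
        = (\<Sum>\<^sub>\<infinity>i\<in>S. (f (real_of_int i / real N) - f 0)\<^sup>2 / real N)"
      by (rule infsum_cong_neutral) (auto simp: d)
    also have "\<dots> = (\<Sum>i\<in>S. (f (real_of_int i / real N) - f 0)\<^sup>2 / real N)"
      using fS by (rule infsum_finite)
    finally show ?thesis .
  qed
  have z0: "Phi N f 0 - Psi R N f 0 = 0" for N unfolding Phi_def Psi_def by simp
  have trm: "(\<lambda>N. (f (real_of_int i / real N) - f 0)\<^sup>2 / real N) \<longlonglongrightarrow> 0" for i
  proof -
    have a: "(\<lambda>N. real_of_int i / real N) \<longlonglongrightarrow> 0"
      by (intro tendsto_divide_0[OF tendsto_const] filterlim_at_top_imp_at_infinity filterlim_real_sequentially)
    have "(\<lambda>N. f (real_of_int i / real N)) \<longlonglongrightarrow> f 0"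
      using cont a by (rule isCont_tendsto_compose)
    hence b: "(\<lambda>N. (f (real_of_int i / real N) - f 0)\<^sup>2) \<longlonglongrightarrow> (f 0 - f 0)\<^sup>2"
      by (intro tendsto_intros)
    have c: "(\<lambda>N. 1 / real N) \<longlonglongrightarrow> 0"
      by (rule lim_const_over_n)
    have "(\<lambda>N. (f (real_of_int i / real N) - f 0)\<^sup>2 * (1 / real N)) \<longlonglongrightarrow> (f 0 - f 0)\<^sup>2 * 0"
      using b c by (rule tendsto_mult)
    thus ?thesis by simp
  qed
  have "(\<lambda>N. \<Sum>i\<in>S. (f (real_of_int i / real N) - f 0)\<^sup>2 / real N) \<longlonglongrightarrow> (\<Sum>i\<in>S. 0)"
    by (rule tendsto_sum) (rule trm)
  hence "(\<lambda>N. sqrt ((\<Sum>i\<in>S. (f (real_of_int i / real N) - f 0)\<^sup>2 / real N) + sqrt 2 * \<gamma> * 0\<^sup>2)) \<longlonglongrightarrow> sqrt (0 + sqrt 2 * \<gamma> * 0\<^sup>2)"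
    by (intro tendsto_intros) simp
  hence "(\<lambda>N. sip_norm \<gamma> N (\<lambda>i. Phi N f i - Psi R N f i)) \<longlonglongrightarrow> 0"
    unfolding sip_norm_def inf z0 by simp
  hence "(\<lambda>N. ereal (sip_norm \<gamma> N (\<lambda>i. Phi N f i - Psi R N f i))) \<longlonglongrightarrow> ereal 0"
    by (rule tendsto_ereal)
  hence ls0: "limsup (\<lambda>N. ereal (sip_norm \<gamma> N (\<lambda>i. Phi N f i - Psi R N f i))) = ereal 0"
    by (rule lim_imp_Limsup[OF trivial_limit_sequentially])
  hence ls: "limsup (\<lambda>N. ereal (sip_norm \<gamma> N (\<lambda>i. Phi N f i - Psi R N f i))) = 0"
    by (simp add: zero_ereal_def)
  show ?thesis
    unfolding strongly_converges_def
  proof (intro exI[of _ "\<lambda>M. f"] conjI allI)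
    fix M :: nat
    show "f \<in> core_C" unfolding core_C_def using assms(3)
      by (intro CollectI exI[of _ f] exI[of _ 0]) auto
  next
    show "(\<lambda>M. sbm_norm \<gamma> (\<lambda>x. f x - f x)) \<longlonglongrightarrow> 0"
      by (simp add: sbm_norm_def)
  next
    show "(\<lambda>M. limsup (\<lambda>N. ereal (sip_norm \<gamma> N (\<lambda>i. Phi N f i - Psi R N f i)))) \<longlonglongrightarrow> 0"
      unfolding ls by simp
  qed
qed

end
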